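(* Let $\mathcal{A}\subseteq C^0([0,1])$ be a subalgebra which is closed with respect to uniform convergence and contains a non-constant function, and let $x_0\in(0,1)$. Then $\mathcal{A}$ contains a non-constant function $f$ which is differentiable at $x_0$.
   Context: $C^0([0,1])$ denotes the algebra of continuous real-valued functions on $[0,1]$ with the supremum norm; the subalgebra is not assumed to contain the constants. *)

theory Defs
  imports "HOL-Analysis.Analysis"
begin

text \<open>Elements of C^0([0,1]) are represented canonically as functions
  real => real that are continuous on [0,1] and vanish outside [0,1].\<close>
definition C01 :: "(real \<Rightarrow> real) set" where
  "C01 = {f. continuous_on {0..1} f \<and> (\<forall>x. x \<notin> {0..1} \<longrightarrow> f x = 0)}"

text \<open>A (real) subalgebra of C^0([0,1]); constants need not belong to it.\<close>
definition subalgebra_C01 :: "(real \<Rightarrow> real) set \<Rightarrow> bool" where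
  "subalgebra_C01 A \<longleftrightarrow> A \<subseteq> C01 \<and> (\<lambda>x. 0) \<in> A \<and>
     (\<forall>f\<in>A. \<forall>g\<in>A. (\<lambda>x. f x + g x) \<in> A) \<and>
     (\<forall>c. \<forall>f\<in>A. (\<lambda>x. c * f x) \<in> A) \<and>
     (\<forall>f\<in>A. \<forall>g\<in>A. (\<lambda>x. f x * g x) \<in> A)"

text \<open>Closed under uniform convergence on [0,1] (for functions in C01,
  uniform convergence on UNIV is the same as on [0,1] plus vanishing outside).\<close>
definition uniformly_closed :: "(real \<Rightarrow> real) set \<Rightarrow> bool" where
  "uniformly_closed A \<longleftrightarrow>
     (\<forall>F g. (\<forall>n. F n \<in> A) \<and> uniform_limit UNIV F g sequentially \<longrightarrow> g \<in> A)"

definition nonconstant_01 :: "(real \<Rightarrow> real) \<Rightarrow> bool" where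
  "nonconstant_01 f \<longleftrightarrow> (\<exists>x\<in>{0..1}. \<exists>y\<in>{0..1}. f x \<noteq> f y)"

end

theory Submission
  imports Defs
begin

lemma sa_add: "subalgebra_C01 A \<Longrightarrow> f \<in> A \<Longrightarrow> g \<in> A \<Longrightarrow> (\<lambda>x. f x + g x) \<in> A"
  unfolding subalgebra_C01_def by simp
lemma sa_mult: "subalgebra_C01 A \<Longrightarrow> f \<in> A \<Longrightarrow> g \<in> A \<Longrightarrow> (\<lambda>x. f x * g x) \<in> A"
  unfolding subalgebra_C01_def by simp
lemma sa_scale: "subalgebra_C01 A \<Longrightarrow> f \<in> A \<Longrightarrow> (\<lambda>x. c * f x) \<in> A"
  unfolding subalgebra_C01_def by simp
lemma sa_zero: "subalgebra_C01 A \<Longrightarrow> (\<lambda>x. 0) \<in> A"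
  unfolding subalgebra_C01_def by simp
lemma sa_sub: "subalgebra_C01 A \<Longrightarrow> A \<subseteq> C01"
  unfolding subalgebra_C01_def by simp

lemma poly_in_A:
  assumes A: "subalgebra_C01 A" and g: "g \<in> A"
    and p: "real_polynomial_function p"
  shows "(\<lambda>x. p (g x) - p 0) \<in> A"
  using p
proof (induct p)
  case (linear f)
  then obtain c where f: "f = (\<lambda>x. x * c)" by (auto simp: real_bounded_linear)
  have "(\<lambda>x. c * g x) \<in> A" using sa_scale[OF A g] .
  moreover have "(\<lambda>x. f (g x) - f 0) = (\<lambda>x. c * g x)" using f by (auto simp: mult.commute)
  ultimately show ?case by simp
next
  case (const c)
  then show ?case using sa_zero[OF A] by simp
next
  case (add f1 f2)
  have "(\<lambda>x. (f1 (g x) - f1 0) + (f2 (g x) - f2 0)) \<in> A"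
    by (rule sa_add[OF A add(2) add(4)])
  moreover have "(\<lambda>x. (f1 (g x) - f1 0) + (f2 (g x) - f2 0)) = (\<lambda>x. (f1 (g x) + f2 (g x)) - (f1 0 + f2 0))"
    by (auto simp: algebra_simps)
  ultimately show ?case by simp
next
  case (mult f1 f2)
  define F1 where "F1 = (\<lambda>x. f1 (g x) - f1 0)"
  define F2 where "F2 = (\<lambda>x. f2 (g x) - f2 0)"
  have F1: "F1 \<in> A" and F2: "F2 \<in> A" using mult(2) mult(4) by (simp_all add: F1_def F2_def)
  have "(\<lambda>x. (F1 x * F2 x + f2 0 * F1 x) + f1 0 * F2 x) \<in> A"
    by (intro sa_add[OF A] sa_mult[OF A] sa_scale[OF A] F1 F2)
  moreover have "(\<lambda>x. (F1 x * F2 x + f2 0 * F1 x) + f1 0 * F2 x) = (\<lambda>x. f1 (g x) * f2 (g x) - f1 0 * f2 0)"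
    by (auto simp: F1_def F2_def algebra_simps)
  ultimately show ?case by simp
qed

theorem mainTheorem5:
  fixes A :: "(real \<Rightarrow> real) set" and x0 :: real
  assumes "subalgebra_C01 A"
    and "uniformly_closed A"
    and "\<exists>f\<in>A. nonconstant_01 f"
    and "x0 \<in> {0<..<1}"
  shows "\<exists>f\<in>A. nonconstant_01 f \<and> f differentiable (at x0)"
proof -
  obtain g where g: "g \<in> A" and nc: "nonconstant_01 g" using assms(3) by blast
  have gC: "g \<in> C01" using g sa_sub[OF assms(1)] by blast
  have gcont: "continuous_on {0..1} g" and gout: "\<And>x. x \<notin> {0..1} \<Longrightarrow> g x = 0"
    using gC unfolding C01_def by auto
  define c where "c = g x0"
  have "\<exists>y. y \<in> {0..1} \<and> g y \<noteq> c"
  proof -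
    obtain a b where ab: "a \<in> {0..1}" "b \<in> {0..1}" "g a \<noteq> g b"
      using nc unfolding nonconstant_01_def by blast
    show ?thesis
    proof (cases "g a = c")
      case True thus ?thesis using ab by auto
    next
      case False thus ?thesis using ab by auto
    qed
  qed
  then obtain y where y: "y \<in> {0..1}" "g y \<noteq> c" by blast
  define r where "r = \<bar>g y - c\<bar>"
  have r: "r > 0" using y r_def by auto
  define K where "K = max 0 (\<bar>0 - c\<bar> - r/2)"
  define h where "h = (\<lambda>t. max 0 (\<bar>t - c\<bar> - r/2) - K)"
  have h0: "h 0 = 0" by (simp add: h_def K_def)
  have hcont: "continuous_on UNIV h" unfolding h_def by (intro continuous_intros)
  define S where "S = g ` {0..1} \<union> {0}"
  have Sc: "compact S" unfolding S_def
    by (intro compact_Un compact_continuous_image gcont) auto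
  have "\<forall>n::nat. \<exists>p. real_polynomial_function p \<and> (\<forall>t\<in>S. \<bar>h t - p t\<bar> < 1/(Suc n))"
  proof
    fix n :: nat
    have pos: "(0::real) < 1/(Suc n)" by simp
    obtain p where "real_polynomial_function p" "\<And>t. t \<in> S \<Longrightarrow> \<bar>h t - p t\<bar> < 1/(Suc n)"
      using Stone_Weierstrass_real_polynomial_function[OF Sc continuous_on_subset[OF hcont subset_UNIV] pos]
      by blast
    then show "\<exists>p. real_polynomial_function p \<and> (\<forall>t\<in>S. \<bar>h t - p t\<bar> < 1/(Suc n))" by blast
  qed
  then obtain P where P: "\<And>n. real_polynomial_function (P n)"
    "\<And>n t. t \<in> S \<Longrightarrow> \<bar>h t - P n t\<bar> < 1/(Suc n)"
    by (subst (asm) choice_iff) blast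
  define F where "F = (\<lambda>n x. P n (g x) - P n 0)"
  have FA: "\<forall>n. F n \<in> A" using poly_in_A[OF assms(1) g P(1)] by (simp add: F_def)
  have gS: "g x \<in> S" for x
    using gout by (cases "x \<in> {0..1}") (auto simp: S_def)
  have "uniform_limit UNIV F (\<lambda>x. h (g x)) sequentially"
  proof (rule uniform_limitI)
    fix e :: real assume e: "e > 0"
    obtain N :: nat where N: "2 / e < N" using reals_Archimedean2 by blast
    show "\<forall>\<^sub>F n in sequentially. \<forall>x\<in>UNIV. dist (F n x) (h (g x)) < e"
    proof (rule eventually_sequentiallyI[of N])
      fix n assume n: "N \<le> n"
      have "2 / e < Suc n" using N n by linarith
      hence le: "2 / (Suc n) < e" using e by (simp add: field_simps)
      show "\<forall>x\<in>UNIV. dist (F n x) (h (g x)) < e"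
      proof
        fix x
        have a: "\<bar>h (g x) - P n (g x)\<bar> < 1/(Suc n)" using P(2) gS by blast
        have b: "\<bar>h 0 - P n 0\<bar> < 1/(Suc n)" using P(2) by (simp add: S_def)
        have "dist (F n x) (h (g x)) \<le> \<bar>h (g x) - P n (g x)\<bar> + \<bar>h 0 - P n 0\<bar>"
          using h0 by (simp add: F_def dist_real_def)
        also have "\<dots> < 2/(Suc n)" using a b by simp
        finally show "dist (F n x) (h (g x)) < e" using le by linarith
      qed
    qed
  qed
  hence hgA: "(\<lambda>x. h (g x)) \<in> A" using assms(2) FA unfolding uniformly_closed_def by auto
  have x0I: "x0 \<in> {0..1}" using assms(4) by auto
  have "h (g x0) \<noteq> h (g y)"
    using r by (simp add: h_def c_def[symmetric] r_def)
  hence ncf: "nonconstant_01 (\<lambda>x. h (g x))" unfolding nonconstant_01_def using x0I y(1) by (intro bexI[of _ x0] bexI[of _ y])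
  have "x0 \<in> interior {0..1::real}" using assms(4) by simp
  hence ic: "isCont g x0" using continuous_on_interior gcont by blast
  have r2: "r/2 > 0" using r by simp
  obtain d where d: "d > 0" "\<And>x. dist x x0 < d \<Longrightarrow> dist (g x) (g x0) < r/2"
    using ic r2 unfolding continuous_at_eps_delta by blast
  have "((\<lambda>x. h (g x)) has_derivative (\<lambda>_. 0)) (at x0 within UNIV)"
  proof (rule has_derivative_transform_within[OF has_derivative_const d(1)])
    fix x' :: real assume "dist x' x0 < d"
    hence "\<bar>g x' - c\<bar> < r/2" using d(2) by (simp add: dist_real_def c_def)
    thus "h c = h (g x')" using r by (simp add: h_def)
  qed (simp_all add: c_def)
  hence "(\<lambda>x. h (g x)) differentiable (at x0)" unfolding differentiable_def by blast
  thus ?thesis using hgA ncf by blast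
qed

end
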